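(* Let $\Pi=\{P_0,P_1,Q_1,Q_2,Q_3\}$ (five unary relation symbols) and $\mathcal{R}=\{R\}$ (one binary relation symbol). Let $\mathcal{F}$ be the class of all pointed $\mathrm{SB}(\Pi)$-models $(M,w)$ whose domain is finite. Then there exists a $(\Pi,\mathcal{R})$-automaton $A$ that halts in $\mathcal{F}$ and is strongly nonlocal in $\mathcal{F}$.
   Context: Let $\Pi$ be a finite set of unary relation symbols and $\mathcal{R}=\{R_1,\dots,R_k\}$ a finite set of binary relation symbols. A $(\Pi,\mathcal{R})$-model $M$ consists of a nonempty domain $W$ together with interpretations $P^M\subseteq W$ for $P\in\Pi$ and $R_i^M\subseteq W\times W$; a pointed model is a pair $(M,w)$ with $w\in W$. An $\mathrm{SB}(\Pi)$-model is a $(\Pi,\{R\})$-model in which $R^M$ is symmetric and irreflexive. A $(\Pi,\mathcal{R})$-automaton is a tuple $A=(Q,\mathcal{M},\pi,\delta,\mu,F,G)$ where $Q$ (states) and $\mathcal{M}$ (messages) are nonempty finite or countably infinite sets, $\pi:\mathrm{Pow}(\Pi)\to Q$, $\delta:(\mathrm{Pow}(\mathcal{M}))^k\times Q\to Q$, $\mu:Q\times\mathcal{R}\to\mathcal{M}$, $F\subseteq Q$ (accepting states) and $G\subseteq Q\setminus F$ (rejecting states). Run on a model $M$ with domain $W$, it defines configurations $f_n:W\to Q$: $f_0(w)=\pi(\{P\in\Pi: w\in P^M\})$ and $f_{n+1}(w)=\delta((N_1,\dots,N_k),f_n(w))$ where $N_i=\{\mu(f_n(v),R_i): (w,v)\in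 R_i^M\}$. $A$ accepts $(M,w)$ in round $n$ if $f_n(w)\in F$ and $f_m(w)\notin G$ for all $m<n$; $A$ rejects $(M,w)$ in round $n$ if $f_n(w)\in G$ and $f_m(w)\notin F$ for all $m<n$. $A$ accepts (rejects) $(M,w)$ if it does so in some round. For a class $\mathcal{K}$ of pointed models: $A$ converges in $\mathcal{K}$ if it accepts or rejects every $(M,w)\in\mathcal{K}$; $A$ halts in $\mathcal{K}$ if it converges in $\mathcal{K}$ and, for every $(M,w)\in\mathcal{K}$, once $f_n(w)\in F\cup G$ for the first time, $f_m(w)=f_n(w)$ for all $m\ge n$. $A$ specifies a local algorithm in $\mathcal{K}$ if there is $n\in\mathbb{N}$ such that every $(M,w)\in\mathcal{K}$ is accepted or rejected by $A$ in some round $m\le n$. $A$ is strongly nonlocal in $\mathcal{K}$ if there is no $(\Pi,\mathcal{R})$-automaton $B$ that specifies a local algorithm in $\mathcal{K}$ and accepts exactly the same pointed models in $\mathcal{K}$ as $A$. *)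

theory Defs
  imports Main
begin

text \<open>Unary symbols Pi = {P0,P1,Q1,Q2,Q3}; binary symbols indexed by a type 'r
  (for the theorem, 'r = unit, i.e. the single symbol R).
  Domains of models are sets of natural numbers (every finite domain is isomorphic
  to one); states and messages are natural numbers drawn from explicit carrier sets
  (every finite or countably infinite set embeds into nat).\<close>

datatype usym = P0 | P1 | Q1 | Q2 | Q3

record ('p, 'r) model =
  dom :: "nat set"
  val :: "'p \<Rightarrow> nat set"
  rel :: "'r \<Rightarrow> (nat \<times> nat) set"

definition is_model :: "('p, 'r) model \<Rightarrow> bool" where
  "is_model M \<longleftrightarrow> dom M \<noteq> {} \<and> (\<forall>P. val M P \<subseteq> dom M) \<and>
     (\<forall>i. rel M i \<subseteq> dom M \<times> dom M)"

text \<open>An automaton (Q, Msgs, pi, delta, mu, F, G). A k-tuple of message sets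
  (one per binary symbol) is represented as a function 'r => nat set.\<close>
record ('p, 'r) automaton =
  states :: "nat set"
  msgs :: "nat set"
  init :: "'p set \<Rightarrow> nat"
  trans :: "('r \<Rightarrow> nat set) \<Rightarrow> nat \<Rightarrow> nat"
  msg :: "nat \<Rightarrow> 'r \<Rightarrow> nat"
  acc :: "nat set"
  rej :: "nat set"

definition is_automaton :: "('p, 'r) automaton \<Rightarrow> bool" where
  "is_automaton A \<longleftrightarrow> states A \<noteq> {} \<and> msgs A \<noteq> {} \<and>
     (\<forall>S. init A S \<in> states A) \<and>
     (\<forall>N q. (\<forall>i. N i \<subseteq> msgs A) \<longrightarrow> q \<in> states A \<longrightarrow> trans A N q \<in> states A) \<and>
     (\<forall>q i. q \<in> states A \<longrightarrow> msg A q i \<in> msgs A) \<and>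
     acc A \<subseteq> states A \<and> rej A \<subseteq> states A - acc A"

primrec config :: "('p, 'r) automaton \<Rightarrow> ('p, 'r) model \<Rightarrow> nat \<Rightarrow> nat \<Rightarrow> nat" where
  "config A M 0 w = init A {P. w \<in> val M P}"
| "config A M (Suc n) w =
     trans A (\<lambda>i. {msg A (config A M n v) i | v. (w, v) \<in> rel M i}) (config A M n w)"

definition accepts_in :: "('p, 'r) automaton \<Rightarrow> ('p, 'r) model \<Rightarrow> nat \<Rightarrow> nat \<Rightarrow> bool" where
  "accepts_in A M w n \<longleftrightarrow> config A M n w \<in> acc A \<and> (\<forall>m<n. config A M m w \<notin> rej A)"

definition rejects_in :: "('p, 'r) automaton \<Rightarrow> ('p, 'r) model \<Rightarrow> nat \<Rightarrow> nat \<Rightarrow> bool" where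
  "rejects_in A M w n \<longleftrightarrow> config A M n w \<in> rej A \<and> (\<forall>m<n. config A M m w \<notin> acc A)"

definition accepts :: "('p, 'r) automaton \<Rightarrow> ('p, 'r) model \<Rightarrow> nat \<Rightarrow> bool" where
  "accepts A M w \<longleftrightarrow> (\<exists>n. accepts_in A M w n)"

definition rejects :: "('p, 'r) automaton \<Rightarrow> ('p, 'r) model \<Rightarrow> nat \<Rightarrow> bool" where
  "rejects A M w \<longleftrightarrow> (\<exists>n. rejects_in A M w n)"

definition converges :: "('p, 'r) automaton \<Rightarrow> (('p, 'r) model \<times> nat) set \<Rightarrow> bool" where
  "converges A K \<longleftrightarrow> (\<forall>(M, w) \<in> K. accepts A M w \<or> rejects A M w)"

definition halts :: "('p, 'r) automaton \<Rightarrow> (('p, 'r) model \<times> nat) set \<Rightarrow> bool" where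
  "halts A K \<longleftrightarrow> converges A K \<and>
     (\<forall>(M, w) \<in> K. \<forall>n.
        (config A M n w \<in> acc A \<union> rej A \<and> (\<forall>m<n. config A M m w \<notin> acc A \<union> rej A))
        \<longrightarrow> (\<forall>m\<ge>n. config A M m w = config A M n w))"

definition specifies_local :: "('p, 'r) automaton \<Rightarrow> (('p, 'r) model \<times> nat) set \<Rightarrow> bool" where
  "specifies_local A K \<longleftrightarrow>
     (\<exists>n. \<forall>(M, w) \<in> K. \<exists>m\<le>n. accepts_in A M w m \<or> rejects_in A M w m)"

definition strongly_nonlocal :: "('p, 'r) automaton \<Rightarrow> (('p, 'r) model \<times> nat) set \<Rightarrow> bool" where
  "strongly_nonlocal A K \<longleftrightarrow>
     \<not> (\<exists>B. is_automaton B \<and> specifies_local B K \<and>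
            (\<forall>(M, w) \<in> K. accepts B M w \<longleftrightarrow> accepts A M w))"

definition finite_SB :: "((usym, unit) model \<times> nat) set" where
  "finite_SB = {(M, w). is_model M \<and> w \<in> dom M \<and> finite (dom M) \<and>
       sym (rel M ()) \<and> irrefl (rel M ())}"

end

theory Submission
  imports Defs "HOL-Library.Countable"
begin

datatype st = Alive nat "bool list" | Done nat "bool list" | Bad nat

instance st :: countable by countable_datatype

fun idx :: "st \<Rightarrow> nat" where
  "idx (Alive c w) = c" | "idx (Done c w) = c" | "idx (Bad c) = c"

definition cidx :: "usym set \<Rightarrow> nat" where
  "cidx S = (if Q2 \<in> S then 1 else if Q3 \<in> S then 2 else 0)"

definition bad :: "bool list \<Rightarrow> bool" where
  "bad w \<longleftrightarrow> (\<exists>i p. 0 < p \<and> i + 5*p \<le> length w \<and>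
      (\<forall>k. i \<le> k \<longrightarrow> k < i + 4*p \<longrightarrow> w!k = w!(k+p)))"

definition step :: "st set \<Rightarrow> st \<Rightarrow> st" where
  "step N s = (case s of
     Alive c w \<Rightarrow> (let S = {t\<in>N. idx t = Suc c mod 3} in
        if S = {} then Done c w
        else if (\<exists>u. S = {Alive (Suc c mod 3) u}) then
          (let w' = hd w # (SOME u. S = {Alive (Suc c mod 3) u}) in
             if bad w' then Bad c else Alive c w')
        else if (\<exists>u. S = {Done (Suc c mod 3) u}) then
          Done c (hd w # (SOME u. S = {Done (Suc c mod 3) u}))
        else Bad c)
   | Done c w \<Rightarrow> Done c w
   | Bad c \<Rightarrow> Bad c)"

definition initst :: "usym set \<Rightarrow> st" where
  "initst S = Alive (cidx S) [P1 \<in> S]"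

definition AccS :: "st set" where "AccS = {Done c w | c w. odd (length w)}"
definition RejS :: "st set" where "RejS = {Done c w | c w. even (length w)} \<union> range Bad"

definition theA :: "(usym, unit) automaton" where
  "theA = \<lparr> states = UNIV, msgs = UNIV, init = \<lambda>S. to_nat (initst S),
     trans = \<lambda>N q. to_nat (step (from_nat ` N ()) (from_nat q)),
     msg = \<lambda>q i. q, acc = to_nat ` AccS, rej = to_nat ` RejS \<rparr>"

primrec cfg :: "(usym, unit) model \<Rightarrow> nat \<Rightarrow> nat \<Rightarrow> st" where
  "cfg M 0 x = initst {P. x \<in> val M P}"
| "cfg M (Suc n) x = step {cfg M n v | v. (x, v) \<in> rel M ()} (cfg M n x)"

lemma config_cfg: "config theA M n x = to_nat (cfg M n x)"
proof (induction n arbitrary: x)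
  case 0 then show ?case by (simp add: theA_def)
next
  case (Suc n)
  have "from_nat ` {msg theA (config theA M n v) () | v. (x, v) \<in> rel M ()}
        = {cfg M n v | v. (x, v) \<in> rel M ()}"
  proof -
    have m: "msg theA q i = q" for q i by (simp add: theA_def)
    show ?thesis by (auto simp: m Suc image_iff; metis from_nat_to_nat)
  qed
  moreover have "trans theA N q = to_nat (step (from_nat ` N ()) (from_nat q))" for N q
    by (simp add: theA_def)
  ultimately show ?case by (simp add: Suc)
qed

lemma automaton_theA: "is_automaton theA"
  unfolding is_automaton_def theA_def AccS_def RejS_def
  by (auto dest!: injD[OF inj_to_nat])

lemma idx_step: "idx (step N s) = idx s"
  by (cases s) (auto simp: step_def Let_def)

lemma frozen: "(\<forall>c w. s \<noteq> Alive c w) \<Longrightarrow> step N s = s"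
  by (cases s) (auto simp: step_def)

lemma alive_step:
  assumes "step N s = Alive c w"
  shows "\<exists>w0 u. s = Alive c w0 \<and> {t\<in>N. idx t = Suc c mod 3} = {Alive (Suc c mod 3) u}
           \<and> w = hd w0 # u \<and> \<not> bad w"
proof (cases s)
  case (Alive c0 w0)
  let ?S = "{t\<in>N. idx t = Suc c0 mod 3}"
  show ?thesis
  proof (cases "?S = {}")
    case True then show ?thesis using assms Alive by (simp add: step_def)
  next
    case F1: False
    show ?thesis
    proof (cases "\<exists>u. ?S = {Alive (Suc c0 mod 3) u}")
      case True
      then obtain u where u: "?S = {Alive (Suc c0 mod 3) u}" by blast
      have su: "(SOME u. ?S = {Alive (Suc c0 mod 3) u}) = u" using u by auto
      show ?thesis using assms Alive F1 True su u
        by (auto simp: step_def Let_def split: if_splits)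
    next
      case False
      then show ?thesis using assms Alive F1 by (auto simp: step_def Let_def split: if_splits)
    qed
  qed
qed (use assms in \<open>auto simp: step_def\<close>)

definition ci :: "(usym, unit) model \<Rightarrow> nat \<Rightarrow> nat" where
  "ci M x = cidx {P. x \<in> val M P}"

definition succ :: "(usym, unit) model \<Rightarrow> nat \<Rightarrow> nat \<Rightarrow> bool" where
  "succ M x y \<longleftrightarrow> (x, y) \<in> rel M () \<and> ci M y = Suc (ci M x) mod 3"

lemma idx_cfg: "idx (cfg M n x) = ci M x"
  by (induction n arbitrary: x) (auto simp: idx_step initst_def ci_def)

lemma cfg_Suc_alive:
  assumes "cfg M (Suc n) x = Alive c w"
  shows "\<exists>w0 u. cfg M n x = Alive c w0 \<and> (\<forall>y. succ M x y \<longrightarrow> cfg M n y = Alive (Suc c mod 3) u)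
     \<and> (\<exists>y. succ M x y) \<and> w = hd w0 # u \<and> \<not> bad w"
proof -
  from alive_step[of "{cfg M n v | v. (x, v) \<in> rel M ()}" "cfg M n x" c w] assms
  obtain w0 u where w0: "cfg M n x = Alive c w0"
    and S: "{t\<in>{cfg M n v | v. (x, v) \<in> rel M ()}. idx t = Suc c mod 3} = {Alive (Suc c mod 3) u}"
    and w: "w = hd w0 # u" and nb: "\<not> bad w" by auto
  have c: "c = ci M x" using idx_cfg[of M n x] w0 by simp
  have S2: "{t\<in>{cfg M n v | v. (x, v) \<in> rel M ()}. idx t = Suc c mod 3} = {cfg M n y | y. succ M x y}"
    by (auto simp: succ_def idx_cfg c)
  have A: "\<forall>y. succ M x y \<longrightarrow> cfg M n y = Alive (Suc c mod 3) u"
    using S S2 by (metis (mono_tags, lifting) mem_Collect_eq singletonD)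
  have "Alive (Suc c mod 3) u \<in> {cfg M n y | y. succ M x y}" using S S2 by (metis singletonI)
  then have "\<exists>y. succ M x y" by auto
  then show ?thesis using w0 A w nb by blast
qed

lemma alive_inv: "cfg M n x = Alive c w \<Longrightarrow> length w = Suc n \<and> hd w = (x \<in> val M P1) \<and> c = ci M x"
proof (induction n arbitrary: x c w)
  case 0 then show ?case by (auto simp: initst_def ci_def)
next
  case (Suc n)
  from cfg_Suc_alive[OF Suc.prems] obtain w0 u where
    a: "cfg M n x = Alive c w0" and b: "\<forall>y. succ M x y \<longrightarrow> cfg M n y = Alive (Suc c mod 3) u"
    and e: "\<exists>y. succ M x y" and w: "w = hd w0 # u" by blast
  from e obtain y where "succ M x y" by blast
  with b have "cfg M n y = Alive (Suc c mod 3) u" by blast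
  from Suc.IH[OF this] Suc.IH[OF a] w show ?case by simp
qed

lemma alive_word:
  assumes "cfg M n x = Alive c w" "f 0 = x" "\<forall>i<k. succ M (f i) (f (Suc i))" "k \<le> n"
  shows "w ! k = (f k \<in> val M P1)"
  using assms
proof (induction n arbitrary: x c w f k)
  case 0 then show ?case using alive_inv[OF "0.prems"(1)]
    by (cases w) auto
next
  case (Suc n)
  show ?case
  proof (cases k)
    case 0 then show ?thesis using alive_inv[OF Suc.prems(1)] Suc.prems(2)
      by (cases w) auto
  next
    case (Suc k')
    from cfg_Suc_alive[OF Suc.prems(1)] obtain w0 u where
      b: "\<forall>y. succ M x y \<longrightarrow> cfg M n y = Alive (Suc c mod 3) u"
      and w: "w = hd w0 # u" by blast
    have "succ M x (f 1)" using Suc.prems(2,3) \<open>k = Suc k'\<close> by force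
    with b have u: "cfg M n (f 1) = Alive (Suc c mod 3) u" by simp
    have "u ! k' = ((\<lambda>i. f (Suc i)) k' \<in> val M P1)"
      by (rule Suc.IH[OF u]) (use Suc.prems \<open>k = Suc k'\<close> in auto)
    then show ?thesis using w \<open>k = Suc k'\<close> by simp
  qed
qed

lemma alive_walk:
  assumes "cfg M n x = Alive c w"
  shows "\<exists>f. f 0 = x \<and> (\<forall>i<n. succ M (f i) (f (Suc i)))"
  using assms
proof (induction n arbitrary: x c w)
  case 0 then show ?case by auto
next
  case (Suc n)
  from cfg_Suc_alive[OF Suc.prems] obtain u y where
    b: "\<forall>y. succ M x y \<longrightarrow> cfg M n y = Alive (Suc c mod 3) u" and y: "succ M x y" by blast
  from Suc.IH[of y] b y obtain f where f: "f 0 = y" "\<forall>i<n. succ M (f i) (f (Suc i))" by blast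
  let ?g = "\<lambda>i. if i = 0 then x else f (i - 1)"
  have "\<forall>i<Suc n. succ M (?g i) (?g (Suc i))"
  proof (intro allI impI)
    fix i assume "i < Suc n"
    then show "succ M (?g i) (?g (Suc i))" using f y by (cases i) auto
  qed
  then show ?case by (intro exI[of _ ?g]) simp
qed

lemma eventually_not_alive:
  assumes M: "is_model M" and fin: "finite (dom M)" and x: "x \<in> dom M"
  shows "\<exists>n. \<forall>c w. cfg M n x \<noteq> Alive c w"
proof (rule ccontr)
  assume "\<not> ?thesis"
  then have alive: "\<forall>n. \<exists>c w. cfg M n x = Alive c w" by blast
  define N where "N = card (dom M)"
  obtain c w where "cfg M N x = Alive c w" using alive by blast
  from alive_walk[OF this] obtain f where f0: "f 0 = x" and fw: "\<forall>i<N. succ M (f i) (f (Suc i))"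
    by blast
  have fdom: "f i \<in> dom M" if "i \<le> N" for i
    using that
  proof (induction i)
    case 0 then show ?case using f0 x by simp
  next
    case (Suc i)
    then have "succ M (f i) (f (Suc i))" using fw by simp
    then have "(f i, f (Suc i)) \<in> rel M ()" by (simp add: succ_def)
    then show ?case using M by (auto simp: is_model_def)
  qed
  have "\<not> inj_on f {0..N}"
  proof
    assume "inj_on f {0..N}"
    then have "card (f ` {0..N}) = Suc N" by (simp add: card_image)
    moreover have "f ` {0..N} \<subseteq> dom M" using fdom by auto
    ultimately have "Suc N \<le> card (dom M)" using card_mono[OF fin] by metis
    then show False by (simp add: N_def)
  qed
  then obtain i j where ij: "i < j" "j \<le> N" "f i = f j"
    unfolding inj_on_def by (metis atLeastAtMost_iff linorder_neqE_nat)
  define p where "p = j - i"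
  have p0: "0 < p" using ij by (simp add: p_def)
  define g where "g k = (if k < i then f k else f (i + (k - i) mod p))" for k
  have g0: "g 0 = x" using f0 by (simp add: g_def)
  have gw: "succ M (g k) (g (Suc k))" for k
  proof (cases "Suc k < i")
    case True then show ?thesis using fw ij by (simp add: g_def)
  next
    case F: False
    show ?thesis
    proof (cases "Suc k = i")
      case True
      then have "g k = f k" "g (Suc k) = f (Suc k)" by (auto simp: g_def)
      moreover have "k < N" using True ij by simp
      ultimately show ?thesis using fw by simp
    next
      case False
      with F have ki: "i \<le> k" by simp
      define r where "r = (k - i) mod p"
      have rp: "r < p" using p0 by (simp add: r_def)
      have gk: "g k = f (i + r)" using ki by (simp add: g_def r_def)
      have e: "(Suc k - i) mod p = Suc r mod p" using ki
        by (simp add: r_def Suc_diff_le mod_Suc_eq)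
      show ?thesis
      proof (cases "Suc r < p")
        case True
        then have "g (Suc k) = f (Suc (i + r))" using ki e by (simp add: g_def)
        moreover have "i + r < N" using True ij p_def by simp
        ultimately show ?thesis using gk fw by simp
      next
        case False
        then have "Suc r = p" using rp by simp
        then have "g (Suc k) = f j" using ki e ij by (simp add: g_def)
        moreover have "Suc (i + r) = j" using \<open>Suc r = p\<close> ij p_def by simp
        moreover have "i + r < N" using \<open>Suc r = p\<close> ij p_def by simp
        ultimately show ?thesis using gk fw by (metis)
      qed
    qed
  qed
  have gper: "g (k + p) = g k" if "i \<le> k" for k
  proof -
    have "k + p - i = (k - i) + p" using that by simp
    then have "(k + p - i) mod p = (k - i) mod p" by simp
    then show ?thesis using that by (simp add: g_def)
  qed
  define n where "n = i + 5 * p"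
  obtain c' w' where cw: "cfg M n x = Alive c' w'" using alive by blast
  have wk: "w' ! k = (g k \<in> val M P1)" if "k \<le> n" for k
    by (rule alive_word[of M n x c' w' g k, OF cw g0]) (use gw that in auto)
  have len: "length w' = Suc n" using alive_inv[OF cw] by simp
  have "bad w'"
    unfolding bad_def
  proof (intro exI conjI allI impI)
    show "0 < p" by (rule p0)
    show "i + 5 * p \<le> length w'" using len n_def by simp
    fix k assume "i \<le> k" "k < i + 4 * p"
    then show "w' ! k = w' ! (k + p)" using wk[of k] wk[of "k+p"] gper[of k] n_def by simp
  qed
  moreover have "\<not> bad w'"
  proof -
    have "n = Suc (n - 1)" using p0 n_def by simp
    then show ?thesis using cfg_Suc_alive[of M "n - 1" x c' w'] cw by auto
  qed
  ultimately show False by simp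
qed

lemma acc_iff: "config theA M n x \<in> acc theA \<longleftrightarrow> cfg M n x \<in> AccS"
  unfolding config_cfg by (simp add: theA_def inj_image_mem_iff)

lemma rej_iff: "config theA M n x \<in> rej theA \<longleftrightarrow> cfg M n x \<in> RejS"
  unfolding config_cfg by (simp add: theA_def inj_image_mem_iff)

lemma notalive_AR: "(\<forall>c w. s \<noteq> Alive c w) \<longleftrightarrow> s \<in> AccS \<union> RejS"
  by (cases s) (auto simp: AccS_def RejS_def)

lemma frozen_cfg:
  assumes "\<forall>c w. cfg M n x \<noteq> Alive c w" "n \<le> m"
  shows "cfg M m x = cfg M n x"
  using assms(2)
proof (induction m)
  case 0 then show ?case by simp
next
  case (Suc m)
  show ?case
  proof (cases "n = Suc m")
    case False
    then have "n \<le> m" using Suc.prems by simp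
    then have "cfg M m x = cfg M n x" by (rule Suc.IH)
    then show ?thesis using assms(1) by (simp add: frozen)
  qed simp
qed

lemma halts_theA: "halts theA finite_SB"
  unfolding halts_def
proof (intro conjI)
  show "converges theA finite_SB"
    unfolding converges_def
  proof (intro ballI)
    fix pr assume pr: "pr \<in> finite_SB"
    obtain M w where prd: "pr = (M, w)" by (cases pr)
    have "(M, w) \<in> finite_SB" using pr prd by simp
    then have M: "is_model M" "finite (dom M)" "w \<in> dom M" by (auto simp: finite_SB_def)
    from eventually_not_alive[OF M] obtain n where "\<forall>c v. cfg M n w \<noteq> Alive c v" by blast
    define n0 where "n0 = (LEAST n. \<forall>c v. cfg M n w \<noteq> Alive c v)"
    have n0: "\<forall>c v. cfg M n0 w \<noteq> Alive c v"
      unfolding n0_def by (rule LeastI_ex) (use \<open>\<forall>c v. cfg M n w \<noteq> Alive c v\<close> in blast)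
    have before: "cfg M m w \<notin> AccS \<union> RejS" if "m < n0" for m
      using not_less_Least[OF that[unfolded n0_def]] notalive_AR by blast
    have "cfg M n0 w \<in> AccS \<union> RejS" using n0 notalive_AR by blast
    then have "accepts theA M w \<or> rejects theA M w"
      unfolding accepts_def rejects_def accepts_in_def rejects_in_def acc_iff rej_iff
      using before by blast
    then show "case pr of (M, w) \<Rightarrow> accepts theA M w \<or> rejects theA M w" using prd by simp
  qed
next
  show "\<forall>(M, w)\<in>finite_SB. \<forall>n. config theA M n w \<in> acc theA \<union> rej theA \<and>
        (\<forall>m<n. config theA M m w \<notin> acc theA \<union> rej theA) \<longrightarrow>
        (\<forall>m\<ge>n. config theA M m w = config theA M n w)"
  proof (clarify)
    fix M w n m
    assume "config theA M n w \<in> acc theA \<union> rej theA" "n \<le> m"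
    then have "cfg M n w \<in> AccS \<union> RejS" using acc_iff rej_iff by blast
    then have "\<forall>c v. cfg M n w \<noteq> Alive c v" using notalive_AR by blast
    from frozen_cfg[OF this \<open>n \<le> m\<close>] show "config theA M m w = config theA M n w"
      by (simp add: config_cfg)
  qed
qed

fun v2 :: "nat \<Rightarrow> nat" where
  "v2 n = (if n = 0 then 0 else if even n then Suc (v2 (n div 2)) else 0)"

declare v2.simps[simp del]

lemma v2_odd: "odd m \<Longrightarrow> v2 m = 0"
  by (subst v2.simps) auto

lemma v2_mult: "0 < m \<Longrightarrow> v2 (2^e * m) = e + v2 m"
proof (induction e)
  case 0 then show ?case by simp
next
  case (Suc e)
  have "v2 (2 ^ Suc e * m) = Suc (v2 (2^e * m))"
    using Suc.prems by (subst v2.simps) simp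
  then show ?case using Suc by simp
qed

lemma v2_decomp: "0 < n \<Longrightarrow> \<exists>q. odd q \<and> n = 2 ^ v2 n * q"
proof (induction n rule: v2.induct)
  case (1 n)
  show ?case
  proof (cases "even n")
    case True
    then have h: "0 < n div 2" using "1.prems" by (auto elim: evenE)
    from "1.IH"[OF _ True h] "1.prems" obtain q where q: "odd q" "n div 2 = 2 ^ v2 (n div 2) * q"
      by auto
    have "v2 n = Suc (v2 (n div 2))" using True "1.prems" by (subst v2.simps) simp
    moreover have "n = 2 * (n div 2)" using True by simp
    ultimately show ?thesis using q by (intro exI[of _ q]) (simp add: mult.assoc)
  next
    case False then show ?thesis using v2_odd[OF False] by auto
  qed
qed

definition ell :: "nat \<Rightarrow> bool" where "ell k = odd (v2 (Suc k))"

lemma find_y: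
  fixes M t a :: nat
  assumes "0 < t" "M = 2 * t"
  shows "\<exists>y. a < y \<and> y \<le> a + M \<and> y mod M = t"
proof -
  define D where "D = Suc a div M"
  define R where "R = Suc a mod M"
  have aR: "Suc a = M * D + R" by (simp add: D_def R_def)
  have RM: "R < M" using assms by (simp add: R_def)
  show ?thesis
  proof (cases "R \<le> t")
    case True
    show ?thesis
      by (rule exI[of _ "M * D + t"]) (use True aR RM assms in auto)
  next
    case False
    have "(M * Suc D + t) mod M = t" using assms by simp
    then show ?thesis
      by (intro exI[of _ "M * Suc D + t"]) (use False aR RM assms in auto)
  qed
qed

lemma ell_key:
  assumes p: "0 < p"
  shows "\<exists>j. a \<le> j \<and> j < a + 4 * p \<and> ell j \<noteq> ell (j + p)"
proof -
  obtain q where q: "odd q" "p = 2 ^ v2 p * q" using v2_decomp[OF p] by blast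
  define e where "e = v2 p"
  have q1: "1 \<le> q" using q by (cases q) auto
  have Mle: "4 * 2^e \<le> 4 * p" using q q1 e_def
    by (metis mult.right_neutral mult_le_mono2)
  obtain y where y: "a < y" "y \<le> a + 2 * 2^(Suc e)" "y mod (2 * 2^(Suc e)) = 2^(Suc e)"
    using find_y[of "2^(Suc e)" "2 * 2^(Suc e)" a] by auto
  define s where "s = y div (2 * 2^(Suc e))"
  have ys: "y = 2^(Suc e) * (2 * s + 1)"
    using y(3) div_mult_mod_eq[of y "2 * 2^(Suc e)"] unfolding s_def
    by (simp add: algebra_simps)
  have v2y: "v2 y = Suc e" using ys v2_mult[of "2*s+1" "Suc e"] v2_odd[of "2*s+1"] by simp
  have "y + p = 2^e * (2 * (2 * s + 1) + q)" using ys q e_def by (simp add: algebra_simps)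
  moreover have "odd (2 * (2 * s + 1) + q)" using q by simp
  ultimately have v2yp: "v2 (y + p) = e"
    using v2_mult[of "2 * (2 * s + 1) + q" e] v2_odd by simp
  define j where "j = y - 1"
  have "Suc j = y" using y j_def by simp
  moreover have "j < a + 4 * p" using y Mle j_def by simp
  moreover have "a \<le> j" using y j_def by simp
  moreover have "v2 (Suc (j + p)) = e" using \<open>Suc j = y\<close> v2yp
    by (metis add_Suc)
  ultimately show ?thesis using v2y unfolding ell_def
    by (intro exI[of _ j]) simp
qed

lemma not_bad_ell: "\<not> bad (map ell [k..<k+n])"
proof
  assume "bad (map ell [k..<k+n])"
  then obtain i p where p: "0 < p" "i + 5 * p \<le> n"
    and eq: "\<forall>m. i \<le> m \<longrightarrow> m < i + 4 * p \<longrightarrow> map ell [k..<k+n] ! m = map ell [k..<k+n] ! (m + p)"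
    unfolding bad_def by auto
  obtain j where j: "k + i \<le> j" "j < k + i + 4 * p" "ell j \<noteq> ell (j + p)"
    using ell_key[OF p(1), of "k + i"] by auto
  define m where "m = j - k"
  have "i \<le> m" "m < i + 4 * p" using j m_def by auto
  then have "map ell [k..<k+n] ! m = map ell [k..<k+n] ! (m + p)" using eq by blast
  moreover have "m + p < n" using \<open>m < i + 4 * p\<close> p by simp
  ultimately have "ell (k + m) = ell (k + (m + p))" by simp
  then show False using j m_def by (simp add: add.assoc)
qed

definition lab :: "nat \<Rightarrow> usym set" where
  "lab k = (if k mod 3 = 0 then {Q1} else if k mod 3 = 1 then {Q2} else {Q3})
           \<union> (if ell k then {P1} else {})"

definition path :: "nat \<Rightarrow> (usym, unit) model" where
  "path L = \<lparr> dom = {0..L}, val = \<lambda>P. {k. k \<le> L \<and> P \<in> lab k},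
     rel = \<lambda>_. {(i, j). i \<le> L \<and> j \<le> L \<and> (j = Suc i \<or> i = Suc j)} \<rparr>"

lemma path_in: "(path L, 0) \<in> finite_SB"
proof -
  have a: "is_model (path L)" unfolding is_model_def path_def by auto
  have b: "sym (rel (path L) ())" by (rule symI) (auto simp: path_def)
  have c: "irrefl (rel (path L) ())" by (rule irreflI) (auto simp: path_def)
  have d: "0 \<in> dom (path L)" "finite (dom (path L))" by (auto simp: path_def)
  show ?thesis unfolding finite_SB_def using a b c d by blast
qed

lemma labels_path: "k \<le> L \<Longrightarrow> {P. k \<in> val (path L) P} = lab k"
  by (auto simp: path_def)

lemma cidx_lab: "cidx (lab k) = k mod 3"
  by (auto simp: cidx_def lab_def)

lemma ci_path: "k \<le> L \<Longrightarrow> ci (path L) k = k mod 3"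
  by (simp add: ci_def labels_path cidx_lab)

lemma step_empty: "{t\<in>N. idx t = Suc c mod 3} = {} \<Longrightarrow> step N (Alive c w) = Done c w"
  by (simp add: step_def)

lemma step_alive: "{t\<in>N. idx t = Suc c mod 3} = {Alive (Suc c mod 3) u} \<Longrightarrow>
   step N (Alive c w) = (if bad (hd w # u) then Bad c else Alive c (hd w # u))"
  by (simp add: step_def Let_def)

lemma step_done: "{t\<in>N. idx t = Suc c mod 3} = {Done (Suc c mod 3) u} \<Longrightarrow>
   step N (Alive c w) = Done c (hd w # u)"
  by (auto simp: step_def Let_def)

definition W :: "nat \<Rightarrow> nat \<Rightarrow> bool list" where "W k n = map ell [k..<k+n]"

lemma W_Suc: "W k (Suc n) = ell k # W (Suc k) n"
proof -
  have "[k..<k+Suc n] = k # [Suc k..<Suc k + n]" by (simp add: upt_conv_Cons del: upt_Suc)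
  then show ?thesis unfolding W_def by simp
qed

lemma cfg_path:
  "k \<le> L \<Longrightarrow> cfg (path L) m k = (if k + m \<le> L then Alive (k mod 3) (W k (Suc m))
      else Done (k mod 3) (W k (Suc L - k)))"
proof (induction m arbitrary: k)
  case 0 then show ?case
    by (simp add: initst_def labels_path cidx_lab W_def) (auto simp: lab_def)
next
  case (Suc m)
  let ?N = "{cfg (path L) m v | v. (k, v) \<in> rel (path L) ()}"
  let ?S = "{t\<in>?N. idx t = Suc (k mod 3) mod 3}"
  have idxv: "idx (cfg (path L) m v) = v mod 3" if "v \<le> L" for v
    using that by (simp add: idx_cfg ci_path)
  have S: "?S = (if k < L then {cfg (path L) m (Suc k)} else {})"
  proof -
    have "?S = {cfg (path L) m v | v. (k, v) \<in> rel (path L) () \<and> idx (cfg (path L) m v) = Suc (k mod 3) mod 3}"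
      by blast
    also have "\<dots> = {cfg (path L) m v | v. v = Suc k \<and> k < L}"
    proof -
      have "((k, v) \<in> rel (path L) () \<and> idx (cfg (path L) m v) = Suc (k mod 3) mod 3) \<longleftrightarrow> (v = Suc k \<and> k < L)" for v
      proof
        assume a: "(k, v) \<in> rel (path L) () \<and> idx (cfg (path L) m v) = Suc (k mod 3) mod 3"
        then have vL: "v \<le> L" and r: "v = Suc k \<or> k = Suc v" by (auto simp: path_def)
        have "v mod 3 = Suc (k mod 3) mod 3" using a idxv[OF vL] by simp
        moreover have "v mod 3 \<noteq> Suc (Suc v mod 3) mod 3" by (simp add: mod_Suc)
        ultimately have "k \<noteq> Suc v" by auto
        then show "v = Suc k \<and> k < L" using r vL by auto
      next
        assume "v = Suc k \<and> k < L"
        then show "(k, v) \<in> rel (path L) () \<and> idx (cfg (path L) m v) = Suc (k mod 3) mod 3"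
          using idxv[of v] by (auto simp: path_def mod_Suc_eq)
      qed
      then show ?thesis by simp
    qed
    finally show ?thesis by auto
  qed
  have cur: "cfg (path L) (Suc m) k = step ?N (cfg (path L) m k)" by simp
  show ?case
  proof (cases "k + Suc m \<le> L")
    case True
    then have kL: "k < L" "Suc k \<le> L" "Suc k + m \<le> L" "k + m \<le> L" by auto
    have cm: "cfg (path L) m k = Alive (k mod 3) (W k (Suc m))" using Suc.IH[of k] Suc.prems kL by simp
    have cs: "cfg (path L) m (Suc k) = Alive (Suc (k mod 3) mod 3) (W (Suc k) (Suc m))"
      using Suc.IH[OF kL(2)] kL by (simp add: mod_Suc_eq)
    have S': "?S = {Alive (Suc (k mod 3) mod 3) (W (Suc k) (Suc m))}" using S kL cs by simp
    have e: "hd (W k (Suc m)) # W (Suc k) (Suc m) = W k (Suc (Suc m))"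
      by (simp add: W_Suc)
    have nb: "\<not> bad (W k (Suc (Suc m)))" unfolding W_def by (rule not_bad_ell)
    have "cfg (path L) (Suc m) k = Alive (k mod 3) (W k (Suc (Suc m)))"
      using step_alive[OF S', of "W k (Suc m)"] cur cm e nb by simp
    then show ?thesis using True by simp
  next
    case False
    show ?thesis
    proof (cases "k + m \<le> L")
      case True
      then have km: "k + m = L" using False by simp
      have cm: "cfg (path L) m k = Alive (k mod 3) (W k (Suc m))" using Suc.IH[of k] Suc.prems True by simp
      show ?thesis
      proof (cases "k < L")
        case False
        then have "?S = {}" using S by simp
        from step_empty[OF this, of "W k (Suc m)"]
        have "cfg (path L) (Suc m) k = Done (k mod 3) (W k (Suc m))" using cur cm by simp
        moreover have "Suc L - k = Suc m" using km by simp
        ultimately show ?thesis using km by simp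
      next
        case True
        have cs: "cfg (path L) m (Suc k) = Done (Suc (k mod 3) mod 3) (W (Suc k) (Suc L - Suc k))"
          using Suc.IH[of "Suc k"] True km by (simp add: mod_Suc_eq)
        have S': "?S = {Done (Suc (k mod 3) mod 3) (W (Suc k) (Suc L - Suc k))}" using S True cs by simp
        have sl: "Suc L - k = Suc (Suc L - Suc k)" using True by simp
        have e: "hd (W k (Suc m)) # W (Suc k) (Suc L - Suc k) = W k (Suc L - k)"
          unfolding sl by (simp add: W_Suc)
        have "cfg (path L) (Suc m) k = Done (k mod 3) (W k (Suc L - k))"
          using step_done[OF S', of "W k (Suc m)"] cur cm e by simp
        then show ?thesis using km by simp
      qed
    next
      case F2: False
      have cm: "cfg (path L) m k = Done (k mod 3) (W k (Suc L - k))" using Suc.IH[of k] Suc.prems F2 by simp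
      show ?thesis using cur cm frozen F2 by simp
    qed
  qed
qed

lemma B_same:
  "k + m \<le> L1 \<Longrightarrow> k + m \<le> L2 \<Longrightarrow> config B (path L1) m k = config B (path L2) m k"
proof (induction m arbitrary: k)
  case 0
  then show ?case using labels_path[of k L1] labels_path[of k L2] by simp
next
  case (Suc m)
  have r: "(k, v) \<in> rel (path L1) i \<longleftrightarrow> (k, v) \<in> rel (path L2) i" for v i
    using Suc.prems by (auto simp: path_def)
  have c: "(k, v) \<in> rel (path L1) i \<Longrightarrow> config B (path L1) m v = config B (path L2) m v" for v i
    using Suc.prems by (intro Suc.IH) (auto simp: path_def)
  have "{msg B (config B (path L1) m v) i | v. (k, v) \<in> rel (path L1) i}
      = {msg B (config B (path L2) m v) i | v. (k, v) \<in> rel (path L2) i}" for i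
  proof (rule Collect_cong, rule iffI)
    fix x
    assume "\<exists>v. x = msg B (config B (path L1) m v) i \<and> (k, v) \<in> rel (path L1) i"
    then obtain v where v: "x = msg B (config B (path L1) m v) i" "(k, v) \<in> rel (path L1) i" by blast
    have "x = msg B (config B (path L2) m v) i" using v c[OF v(2)] by simp
    moreover have "(k, v) \<in> rel (path L2) i" using v(2) r by blast
    ultimately show "\<exists>v. x = msg B (config B (path L2) m v) i \<and> (k, v) \<in> rel (path L2) i" by blast
  next
    fix x
    assume "\<exists>v. x = msg B (config B (path L2) m v) i \<and> (k, v) \<in> rel (path L2) i"
    then obtain v where v: "x = msg B (config B (path L2) m v) i" "(k, v) \<in> rel (path L2) i" by blast
    have v1: "(k, v) \<in> rel (path L1) i" using v(2) r by blast
    have "x = msg B (config B (path L1) m v) i" using v c[OF v1] by simp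
    then show "\<exists>v. x = msg B (config B (path L1) m v) i \<and> (k, v) \<in> rel (path L1) i" using v1 by blast
  qed
  then have "(\<lambda>i. {msg B (config B (path L1) m v) i | v. (k, v) \<in> rel (path L1) i})
      = (\<lambda>i. {msg B (config B (path L2) m v) i | v. (k, v) \<in> rel (path L2) i})" by (rule ext)
  moreover have "config B (path L1) m k = config B (path L2) m k"
    by (rule Suc.IH) (use Suc.prems in auto)
  ultimately show ?case unfolding config.simps by (rule arg_cong2)
qed

lemma A_path: "accepts theA (path L) 0 \<longleftrightarrow> even L"
proof -
  have c: "cfg (path L) n 0 = (if n \<le> L then Alive 0 (W 0 (Suc n)) else Done 0 (W 0 (Suc L)))" for n
    using cfg_path[of 0 L n] by simp
  have lenW: "length (W k n) = n" for k n by (simp add: W_def)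
  show ?thesis
  proof
    assume "accepts theA (path L) 0"
    then obtain n where "cfg (path L) n 0 \<in> AccS" unfolding accepts_def accepts_in_def acc_iff by blast
    then show "even L" using c[of n] lenW by (auto simp: AccS_def split: if_splits)
  next
    assume e: "even L"
    have d: "cfg (path L) (Suc L) 0 = Done 0 (W 0 (Suc L))" by (subst c) simp
    have b: "cfg (path L) m 0 \<notin> RejS" if "m < Suc L" for m
      using that by (subst c) (auto simp: RejS_def)
    have "accepts_in theA (path L) 0 (Suc L)"
      unfolding accepts_in_def acc_iff rej_iff
      using d b e lenW by (auto simp: AccS_def)
    then show "accepts theA (path L) 0" by (auto simp: accepts_def)
  qed
qed

lemma decided:
  assumes "accepts_in B M w m \<or> rejects_in B M w m"
  shows "accepts B M w \<longleftrightarrow> (\<exists>m'\<le>m. accepts_in B M w m')"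
proof
  assume "accepts B M w"
  then obtain m'' where a: "accepts_in B M w m''" by (auto simp: accepts_def)
  show "\<exists>m'\<le>m. accepts_in B M w m'"
  proof (cases "m'' \<le> m")
    case True then show ?thesis using a by blast
  next
    case False
    show ?thesis
    proof (cases "accepts_in B M w m")
      case True then show ?thesis by blast
    next
      case False
      then have "config B M m w \<in> rej B" using assms by (auto simp: rejects_in_def)
      then show ?thesis using a \<open>\<not> m'' \<le> m\<close> by (auto simp: accepts_in_def)
    qed
  qed
qed (auto simp: accepts_def)

theorem theorem3p1:
  shows "\<exists>A :: (usym, unit) automaton. is_automaton A \<and>
           halts A finite_SB \<and> strongly_nonlocal A finite_SB"
proof (intro exI conjI)
  show "is_automaton theA" by (rule automaton_theA)
  show "halts theA finite_SB" by (rule halts_theA)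
  show "strongly_nonlocal theA finite_SB"
    unfolding strongly_nonlocal_def
  proof
    assume "\<exists>B. is_automaton B \<and> specifies_local B finite_SB \<and>
            (\<forall>(M, w)\<in>finite_SB. accepts B M w = accepts theA M w)"
    then obtain B n where loc: "\<forall>(M, w)\<in>finite_SB. \<exists>m\<le>n. accepts_in B M w m \<or> rejects_in B M w m"
      and eqv: "\<forall>(M, w)\<in>finite_SB. accepts B M w = accepts theA M w"
      unfolding specifies_local_def by blast
    define L1 where "L1 = 2 * n + 2"
    define L2 where "L2 = 2 * n + 3"
    have same: "config B (path L1) m 0 = config B (path L2) m 0" if "m \<le> n" for m
      using B_same[of 0 m L1 L2 B] that L1_def L2_def by simp
    have ai: "accepts_in B (path L1) 0 m \<longleftrightarrow> accepts_in B (path L2) 0 m" if "m \<le> n" for m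
    proof -
      have "\<forall>m'\<le>m. config B (path L1) m' 0 = config B (path L2) m' 0" using same that by simp
      then show ?thesis unfolding accepts_in_def by (metis less_imp_le order_refl)
    qed
    have ri: "rejects_in B (path L1) 0 m \<longleftrightarrow> rejects_in B (path L2) 0 m" if "m \<le> n" for m
    proof -
      have "\<forall>m'\<le>m. config B (path L1) m' 0 = config B (path L2) m' 0" using same that by simp
      then show ?thesis unfolding rejects_in_def by (metis less_imp_le order_refl)
    qed
    have "\<exists>m\<le>n. accepts_in B (path L1) 0 m \<or> rejects_in B (path L1) 0 m"
      using bspec[OF loc path_in[of L1]] by simp
    then obtain m where m: "m \<le> n" and d1: "accepts_in B (path L1) 0 m \<or> rejects_in B (path L1) 0 m"
      by blast
    have d2: "accepts_in B (path L2) 0 m \<or> rejects_in B (path L2) 0 m" using d1 ai[OF m] ri[OF m] by blast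
    have "(\<exists>m'\<le>m. accepts_in B (path L1) 0 m') \<longleftrightarrow> (\<exists>m'\<le>m. accepts_in B (path L2) 0 m')"
      using ai m by (meson order_trans)
    then have "accepts B (path L1) 0 \<longleftrightarrow> accepts B (path L2) 0"
      unfolding decided[OF d1] decided[OF d2] .
    moreover have "accepts B (path L1) 0 = accepts theA (path L1) 0"
      using bspec[OF eqv path_in[of L1]] by simp
    moreover have "accepts B (path L2) 0 = accepts theA (path L2) 0"
      using bspec[OF eqv path_in[of L2]] by simp
    moreover have "even L1" "\<not> even L2" using L1_def L2_def by simp_all
    ultimately show False using A_path[of L1] A_path[of L2] by blast
  qed
qed

end
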